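(* Let $G$ be a cactus. Then $G$ is in $B_0$ if and only if $G$ contains none of $M_2$, $M_3$, and $C_r$ for any $r\ge 4$ as an induced subgraph.
   Context: A cactus is a connected graph in which any two simple cycles have at most one vertex in common. $C_r$ denotes the cycle on $r$ vertices. $M_2$ is the graph on vertices $a,b,c,d,e,f,g$ with edges $ab,ac,ad,be,cf,dg$. $M_3$ is the graph on vertices $a,b,c,d,e,f$ with edges $ab,ac,bc,ad,be,cf$. $B_0$ is the class of graphs having an EPG representation (a set of paths on a rectangular grid, one per vertex, two vertices adjacent iff their paths share a grid edge) in which no path has a bend. *)

theory Defs
  imports Main
begin

definition simple_graph :: "'a set \<Rightarrow> ('a \<Rightarrow> 'a \<Rightarrow> bool) \<Rightarrow> bool" where
  "simple_graph V E \<longleftrightarrow> finite V \<and> (\<forall>u v. E u v \<longrightarrow> u \<in> V \<and> v \<in> V) \<and>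
     (\<forall>u v. E u v \<longrightarrow> E v u) \<and> (\<forall>u. \<not> E u u)"

definition graph_connected :: "'a set \<Rightarrow> ('a \<Rightarrow> 'a \<Rightarrow> bool) \<Rightarrow> bool" where
  "graph_connected V E \<longleftrightarrow> V \<noteq> {} \<and>
     (\<forall>u\<in>V. \<forall>v\<in>V. (\<lambda>x y. E x y \<and> x \<in> V \<and> y \<in> V)\<^sup>*\<^sup>* u v)"

definition simple_cycle :: "'a set \<Rightarrow> ('a \<Rightarrow> 'a \<Rightarrow> bool) \<Rightarrow> 'a list \<Rightarrow> bool" where
  "simple_cycle V E xs \<longleftrightarrow> length xs \<ge> 3 \<and> distinct xs \<and> set xs \<subseteq> V \<and>
     (\<forall>i < length xs. E (xs ! i) (xs ! ((i + 1) mod length xs)))"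

definition cycle_edges :: "'a list \<Rightarrow> 'a set set" where
  "cycle_edges xs = {{xs ! i, xs ! ((i + 1) mod length xs)} | i. i < length xs}"

definition cactus :: "'a set \<Rightarrow> ('a \<Rightarrow> 'a \<Rightarrow> bool) \<Rightarrow> bool" where
  "cactus V E \<longleftrightarrow> graph_connected V E \<and>
     (\<forall>xs ys. simple_cycle V E xs \<and> simple_cycle V E ys \<and> cycle_edges xs \<noteq> cycle_edges ys
        \<longrightarrow> card (set xs \<inter> set ys) \<le> 1)"

definition induced_subgraph :: "'b set \<Rightarrow> ('b \<Rightarrow> 'b \<Rightarrow> bool) \<Rightarrow> 'a set \<Rightarrow> ('a \<Rightarrow> 'a \<Rightarrow> bool) \<Rightarrow> bool" where
  "induced_subgraph VH EH V E \<longleftrightarrow> (\<exists>f. inj_on f VH \<and> f ` VH \<subseteq> V \<and>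
     (\<forall>u\<in>VH. \<forall>v\<in>VH. EH u v \<longleftrightarrow> E (f u) (f v)))"

definition cycle_V :: "nat \<Rightarrow> nat set" where "cycle_V r = {..<r}"
definition cycle_E :: "nat \<Rightarrow> nat \<Rightarrow> nat \<Rightarrow> bool" where
  "cycle_E r u v \<longleftrightarrow> u < r \<and> v < r \<and> u \<noteq> v \<and> (v = (u + 1) mod r \<or> u = (v + 1) mod r)"

text \<open>M2: a,b,c,d,e,f,g = 0..6; edges ab,ac,ad,be,cf,dg.\<close>
definition M2_V :: "nat set" where "M2_V = {..<7}"
definition M2_E :: "nat \<Rightarrow> nat \<Rightarrow> bool" where
  "M2_E u v \<longleftrightarrow> {u, v} \<in> {{0,1},{0,2},{0,3},{1,4},{2,5},{3,6}}"

text \<open>M3: a,b,c,d,e,f = 0..5; edges ab,ac,bc,ad,be,cf.\<close>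
definition M3_V :: "nat set" where "M3_V = {..<6}"
definition M3_E :: "nat \<Rightarrow> nat \<Rightarrow> bool" where
  "M3_E u v \<longleftrightarrow> {u, v} \<in> {{0,1},{0,2},{1,2},{0,3},{1,4},{2,5}}"

text \<open>Grid edges of the integer grid are unordered pairs of unit-distance lattice points.
  A path with no bend is a horizontal or vertical segment of positive length, given by
  its set of grid edges.\<close>
definition hseg_edges :: "int \<Rightarrow> int \<Rightarrow> int \<Rightarrow> (int \<times> int) set set" where
  "hseg_edges x1 x2 y = {{(i, y), (i + 1, y)} | i. x1 \<le> i \<and> i < x2}"
definition vseg_edges :: "int \<Rightarrow> int \<Rightarrow> int \<Rightarrow> (int \<times> int) set set" where
  "vseg_edges x y1 y2 = {{(x, j), (x, j + 1)} | j. y1 \<le> j \<and> j < y2}"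

definition bendless_path :: "(int \<times> int) set set \<Rightarrow> bool" where
  "bendless_path P \<longleftrightarrow> (\<exists>x1 x2 y. x1 < x2 \<and> P = hseg_edges x1 x2 y) \<or>
                       (\<exists>x y1 y2. y1 < y2 \<and> P = vseg_edges x y1 y2)"

definition B0_EPG :: "'a set \<Rightarrow> ('a \<Rightarrow> 'a \<Rightarrow> bool) \<Rightarrow> bool" where
  "B0_EPG V E \<longleftrightarrow> (\<exists>P :: 'a \<Rightarrow> (int \<times> int) set set.
     (\<forall>v\<in>V. bendless_path (P v)) \<and>
     (\<forall>u\<in>V. \<forall>v\<in>V. u \<noteq> v \<longrightarrow> (E u v \<longleftrightarrow> P u \<inter> P v \<noteq> {})))"

end

theory Submission
  imports Defs
begin

lemma hedge_eq: "{(i::int, y::int), (i + 1, y)} = {(j, y'), (j + 1, y')} \<longleftrightarrow> i = j \<and> y = y'"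
  by (auto simp: doubleton_eq_iff)

lemma hseg_inter: "hseg_edges a b y \<inter> hseg_edges c d y \<noteq> {} \<longleftrightarrow> max a c < min b d"
proof
  assume "hseg_edges a b y \<inter> hseg_edges c d y \<noteq> {}"
  then obtain i j where "{(i, y), (i + 1, y)} = {(j, y), (j + 1, y)}" "a \<le> i" "i < b" "c \<le> j" "j < d"
    unfolding hseg_edges_def by blast
  then show "max a c < min b d" by (auto simp: hedge_eq)
next
  assume "max a c < min b d"
  then have "{(max a c, y), (max a c + 1, y)} \<in> hseg_edges a b y \<inter> hseg_edges c d y"
    unfolding hseg_edges_def by auto
  then show "hseg_edges a b y \<inter> hseg_edges c d y \<noteq> {}" by blast
qed

lemma vseg_inter: "vseg_edges x a b \<inter> vseg_edges x c d \<noteq> {} \<longleftrightarrow> max a c < min b d"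
proof
  assume "vseg_edges x a b \<inter> vseg_edges x c d \<noteq> {}"
  then obtain i j where "{(x, i), (x, i + 1)} = {(x, j), (x, j + 1)}" "a \<le> i" "i < b" "c \<le> j" "j < d"
    unfolding vseg_edges_def by blast
  then show "max a c < min b d" by (auto simp: doubleton_eq_iff)
next
  assume "max a c < min b d"
  then have "{(x, max a c), (x, max a c + 1)} \<in> vseg_edges x a b \<inter> vseg_edges x c d"
    unfolding vseg_edges_def by auto
  then show "vseg_edges x a b \<inter> vseg_edges x c d \<noteq> {}" by blast
qed

lemma hseg_hseg_disj: "y \<noteq> y' \<Longrightarrow> hseg_edges a b y \<inter> hseg_edges c d y' = {}"
  unfolding hseg_edges_def by (auto simp: doubleton_eq_iff)

lemma vseg_vseg_disj: "x \<noteq> x' \<Longrightarrow> vseg_edges x a b \<inter> vseg_edges x' c d = {}"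
  unfolding vseg_edges_def by (auto simp: doubleton_eq_iff)

lemma hseg_vseg_disj: "hseg_edges a b y \<inter> vseg_edges x c d = {}"
  unfolding hseg_edges_def vseg_edges_def by (auto simp: doubleton_eq_iff)

definition hl :: "int \<Rightarrow> (int \<times> int) set set \<Rightarrow> bool" where
  "hl y P \<longleftrightarrow> (\<exists>x1 x2. x1 < x2 \<and> P = hseg_edges x1 x2 y)"
definition vl :: "int \<Rightarrow> (int \<times> int) set set \<Rightarrow> bool" where
  "vl x P \<longleftrightarrow> (\<exists>y1 y2. y1 < y2 \<and> P = vseg_edges x y1 y2)"

lemma bendless_lines: "bendless_path P \<longleftrightarrow> (\<exists>y. hl y P) \<or> (\<exists>x. vl x P)"
  unfolding bendless_path_def hl_def vl_def by blast

lemma hl_prop: "hl y P \<Longrightarrow> bendless_path Q \<Longrightarrow> P \<inter> Q \<noteq> {} \<Longrightarrow> hl y Q"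
  unfolding bendless_path_def hl_def
  by (metis hseg_hseg_disj hseg_vseg_disj)

lemma vl_prop: "vl x P \<Longrightarrow> bendless_path Q \<Longrightarrow> P \<inter> Q \<noteq> {} \<Longrightarrow> vl x Q"
  unfolding bendless_path_def vl_def
  by (metis vseg_vseg_disj hseg_vseg_disj Int_commute)

lemma reach_prop:
  assumes "(\<lambda>x y. EH x y \<and> x \<in> VH \<and> y \<in> VH)\<^sup>*\<^sup>* w v"
    and "Q (P w)" and "\<And>u v. u \<in> VH \<Longrightarrow> v \<in> VH \<Longrightarrow> EH u v \<Longrightarrow> Q (P u) \<Longrightarrow> Q (P v)"
  shows "Q (P v)"
  using assms(1,2) by (induction rule: rtranclp_induct) (use assms(3) in blast)+

definition irep :: "'b set \<Rightarrow> ('b \<Rightarrow> 'b \<Rightarrow> bool) \<Rightarrow> ('b \<Rightarrow> int) \<Rightarrow> ('b \<Rightarrow> int) \<Rightarrow> bool" where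
  "irep VH EH lo hi \<longleftrightarrow> (\<forall>v\<in>VH. lo v < hi v) \<and>
     (\<forall>u\<in>VH. \<forall>v\<in>VH. u \<noteq> v \<longrightarrow> (EH u v \<longleftrightarrow> max (lo u) (lo v) < min (hi u) (hi v)))"

lemma B0_induced:
  assumes "B0_EPG V E" "induced_subgraph VH EH V E"
  shows "B0_EPG VH EH"
proof -
  obtain P where P: "\<forall>v\<in>V. bendless_path (P v)"
     "\<forall>u\<in>V. \<forall>v\<in>V. u \<noteq> v \<longrightarrow> (E u v \<longleftrightarrow> P u \<inter> P v \<noteq> {})"
    using assms(1) unfolding B0_EPG_def by blast
  obtain f where f: "inj_on f VH" "f ` VH \<subseteq> V" "\<forall>u\<in>VH. \<forall>v\<in>VH. EH u v \<longleftrightarrow> E (f u) (f v)"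
    using assms(2) unfolding induced_subgraph_def by blast
  show ?thesis unfolding B0_EPG_def
  proof (rule exI[of _ "P \<circ> f"], intro conjI ballI impI)
    fix v assume "v \<in> VH" then show "bendless_path ((P \<circ> f) v)" using P f by auto
  next
    fix u v assume uv: "u \<in> VH" "v \<in> VH" "u \<noteq> v"
    then have "f u \<noteq> f v" "f u \<in> V" "f v \<in> V" using f by (auto simp: inj_on_def)
    then show "EH u v = ((P \<circ> f) u \<inter> (P \<circ> f) v \<noteq> {})" using P(2) f(3) uv by auto
  qed
qed

lemma B0_irep:
  assumes "B0_EPG VH EH" "w \<in> VH" "\<forall>v\<in>VH. (\<lambda>x y. EH x y \<and> x \<in> VH \<and> y \<in> VH)\<^sup>*\<^sup>* w v"
  shows "\<exists>lo hi. irep VH EH lo hi"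
proof -
  obtain P where P: "\<forall>v\<in>VH. bendless_path (P v)"
     "\<forall>u\<in>VH. \<forall>v\<in>VH. u \<noteq> v \<longrightarrow> (EH u v \<longleftrightarrow> P u \<inter> P v \<noteq> {})"
    using assms(1) unfolding B0_EPG_def by blast
  have step: "P u \<inter> P v \<noteq> {}" if "u \<in> VH" "v \<in> VH" "EH u v" for u v
  proof -
    show ?thesis
    proof (cases "u = v")
      case True
      have "bendless_path (P u)" using P(1) that(1) by blast
      then have "P u \<noteq> {}" unfolding bendless_path_def hseg_edges_def vseg_edges_def by force
      then show ?thesis using True by auto
    next
      case False
      then show ?thesis using P(2) that by blast
    qed
  qed
  have "(\<exists>y. hl y (P w)) \<or> (\<exists>x. vl x (P w))" using P(1) assms(2) bendless_lines by blast
  then show ?thesis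
  proof
    assume "\<exists>y. hl y (P w)"
    then obtain y where y: "hl y (P w)" by blast
    have all: "hl y (P v)" if "v \<in> VH" for v
    proof -
      have R: "(\<lambda>x y. EH x y \<and> x \<in> VH \<and> y \<in> VH)\<^sup>*\<^sup>* w v" using assms(3) that by blast
      show ?thesis using R
      proof (rule reach_prop[where Q = "hl y" and P = P])
        show "hl y (P w)" by (rule y)
      next
        fix u v'
        assume H: "u \<in> VH" "v' \<in> VH" "EH u v'" "hl y (P u)"
        have "bendless_path (P v')" using P(1) H(2) by blast
        moreover have "P u \<inter> P v' \<noteq> {}" using step[OF H(1,2,3)] .
        ultimately show "hl y (P v')" using hl_prop[OF H(4)] by blast
      qed
    qed
    have "\<forall>v\<in>VH. \<exists>q. fst q < snd q \<and> P v = hseg_edges (fst q) (snd q) y"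
      using all unfolding hl_def by auto
    then obtain g where g: "\<forall>v\<in>VH. fst (g v) < snd (g v) \<and> P v = hseg_edges (fst (g v)) (snd (g v)) y"
      by (rule bchoice[THEN exE]) blast
    show ?thesis
      apply (rule exI[of _ "\<lambda>v. fst (g v)"], rule exI[of _ "\<lambda>v. snd (g v)"])
      unfolding irep_def
    proof (intro conjI ballI impI)
      fix v assume "v \<in> VH" then show "fst (g v) < snd (g v)" using g by blast
    next
      fix u v assume uv: "u \<in> VH" "v \<in> VH" "u \<noteq> v"
      then have "EH u v = (P u \<inter> P v \<noteq> {})" using P(2) by blast
      also have "\<dots> = (max (fst (g u)) (fst (g v)) < min (snd (g u)) (snd (g v)))"
        using g uv by (simp add: hseg_inter)
      finally show "EH u v = (max (fst (g u)) (fst (g v)) < min (snd (g u)) (snd (g v)))" .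
    qed
  next
    assume "\<exists>x. vl x (P w)"
    then obtain x where x: "vl x (P w)" by blast
    have all: "vl x (P v)" if "v \<in> VH" for v
    proof -
      have R: "(\<lambda>x y. EH x y \<and> x \<in> VH \<and> y \<in> VH)\<^sup>*\<^sup>* w v" using assms(3) that by blast
      show ?thesis using R
      proof (rule reach_prop[where Q = "vl x" and P = P])
        show "vl x (P w)" by (rule x)
      next
        fix u v'
        assume H: "u \<in> VH" "v' \<in> VH" "EH u v'" "vl x (P u)"
        have "bendless_path (P v')" using P(1) H(2) by blast
        moreover have "P u \<inter> P v' \<noteq> {}" using step[OF H(1,2,3)] .
        ultimately show "vl x (P v')" using vl_prop[OF H(4)] by blast
      qed
    qed
    have "\<forall>v\<in>VH. \<exists>q. fst q < snd q \<and> P v = vseg_edges x (fst q) (snd q)"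
      using all unfolding vl_def by auto
    then obtain g where g: "\<forall>v\<in>VH. fst (g v) < snd (g v) \<and> P v = vseg_edges x (fst (g v)) (snd (g v))"
      by (rule bchoice[THEN exE]) blast
    show ?thesis
      apply (rule exI[of _ "\<lambda>v. fst (g v)"], rule exI[of _ "\<lambda>v. snd (g v)"])
      unfolding irep_def
    proof (intro conjI ballI impI)
      fix v assume "v \<in> VH" then show "fst (g v) < snd (g v)" using g by blast
    next
      fix u v assume uv: "u \<in> VH" "v \<in> VH" "u \<noteq> v"
      then have "EH u v = (P u \<inter> P v \<noteq> {})" using P(2) by blast
      also have "\<dots> = (max (fst (g u)) (fst (g v)) < min (snd (g u)) (snd (g v)))"
        using g uv by (simp add: vseg_inter)
      finally show "EH u v = (max (fst (g u)) (fst (g v)) < min (snd (g u)) (snd (g v)))" .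
    qed
  qed
qed

lemma M2_no_irep:
  assumes "irep M2_V M2_E lo hi"
  shows False
proof -
  have A: "\<forall>v\<in>M2_V. lo v < hi v" and B: "\<forall>u\<in>M2_V. \<forall>v\<in>M2_V. u \<noteq> v \<longrightarrow> (M2_E u v \<longleftrightarrow> max (lo u) (lo v) < min (hi u) (hi v))"
    using assms unfolding irep_def by auto
  have l0: "lo 0 < hi 0" using A by (simp add: M2_V_def)
  have l1: "lo 1 < hi 1" using A by (simp add: M2_V_def)
  have l2: "lo 2 < hi 2" using A by (simp add: M2_V_def)
  have l3: "lo 3 < hi 3" using A by (simp add: M2_V_def)
  have l4: "lo 4 < hi 4" using A by (simp add: M2_V_def)
  have l5: "lo 5 < hi 5" using A by (simp add: M2_V_def)
  have l6: "lo 6 < hi 6" using A by (simp add: M2_V_def)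
  have e01: "(max (lo 0) (lo 1) < min (hi 0) (hi 1))"
    using B[rule_format, of 0 1] by (simp add: M2_V_def M2_E_def doubleton_eq_iff)
  have e02: "(max (lo 0) (lo 2) < min (hi 0) (hi 2))"
    using B[rule_format, of 0 2] by (simp add: M2_V_def M2_E_def doubleton_eq_iff)
  have e03: "(max (lo 0) (lo 3) < min (hi 0) (hi 3))"
    using B[rule_format, of 0 3] by (simp add: M2_V_def M2_E_def doubleton_eq_iff)
  have e04: "\<not> (max (lo 0) (lo 4) < min (hi 0) (hi 4))"
    using B[rule_format, of 0 4] by (simp add: M2_V_def M2_E_def doubleton_eq_iff)
  have e05: "\<not> (max (lo 0) (lo 5) < min (hi 0) (hi 5))"
    using B[rule_format, of 0 5] by (simp add: M2_V_def M2_E_def doubleton_eq_iff)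
  have e06: "\<not> (max (lo 0) (lo 6) < min (hi 0) (hi 6))"
    using B[rule_format, of 0 6] by (simp add: M2_V_def M2_E_def doubleton_eq_iff)
  have e12: "\<not> (max (lo 1) (lo 2) < min (hi 1) (hi 2))"
    using B[rule_format, of 1 2] by (simp add: M2_V_def M2_E_def doubleton_eq_iff)
  have e13: "\<not> (max (lo 1) (lo 3) < min (hi 1) (hi 3))"
    using B[rule_format, of 1 3] by (simp add: M2_V_def M2_E_def doubleton_eq_iff)
  have e14: "(max (lo 1) (lo 4) < min (hi 1) (hi 4))"
    using B[rule_format, of 1 4] by (simp add: M2_V_def M2_E_def doubleton_eq_iff)
  have e15: "\<not> (max (lo 1) (lo 5) < min (hi 1) (hi 5))"
    using B[rule_format, of 1 5] by (simp add: M2_V_def M2_E_def doubleton_eq_iff)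
  have e16: "\<not> (max (lo 1) (lo 6) < min (hi 1) (hi 6))"
    using B[rule_format, of 1 6] by (simp add: M2_V_def M2_E_def doubleton_eq_iff)
  have e23: "\<not> (max (lo 2) (lo 3) < min (hi 2) (hi 3))"
    using B[rule_format, of 2 3] by (simp add: M2_V_def M2_E_def doubleton_eq_iff)
  have e24: "\<not> (max (lo 2) (lo 4) < min (hi 2) (hi 4))"
    using B[rule_format, of 2 4] by (simp add: M2_V_def M2_E_def doubleton_eq_iff)
  have e25: "(max (lo 2) (lo 5) < min (hi 2) (hi 5))"
    using B[rule_format, of 2 5] by (simp add: M2_V_def M2_E_def doubleton_eq_iff)
  have e26: "\<not> (max (lo 2) (lo 6) < min (hi 2) (hi 6))"
    using B[rule_format, of 2 6] by (simp add: M2_V_def M2_E_def doubleton_eq_iff)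
  have e34: "\<not> (max (lo 3) (lo 4) < min (hi 3) (hi 4))"
    using B[rule_format, of 3 4] by (simp add: M2_V_def M2_E_def doubleton_eq_iff)
  have e35: "\<not> (max (lo 3) (lo 5) < min (hi 3) (hi 5))"
    using B[rule_format, of 3 5] by (simp add: M2_V_def M2_E_def doubleton_eq_iff)
  have e36: "(max (lo 3) (lo 6) < min (hi 3) (hi 6))"
    using B[rule_format, of 3 6] by (simp add: M2_V_def M2_E_def doubleton_eq_iff)
  have e45: "\<not> (max (lo 4) (lo 5) < min (hi 4) (hi 5))"
    using B[rule_format, of 4 5] by (simp add: M2_V_def M2_E_def doubleton_eq_iff)
  have e46: "\<not> (max (lo 4) (lo 6) < min (hi 4) (hi 6))"
    using B[rule_format, of 4 6] by (simp add: M2_V_def M2_E_def doubleton_eq_iff)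
  have e56: "\<not> (max (lo 5) (lo 6) < min (hi 5) (hi 6))"
    using B[rule_format, of 5 6] by (simp add: M2_V_def M2_E_def doubleton_eq_iff)
  show False using l0 l1 l2 l3 l4 l5 l6 e01 e02 e03 e04 e05 e06 e12 e13 e14 e15 e16 e23 e24 e25 e26 e34 e35 e36 e45 e46 e56 unfolding max_def min_def by (smt (verit))
qed

lemma M3_no_irep:
  assumes "irep M3_V M3_E lo hi"
  shows False
proof -
  have A: "\<forall>v\<in>M3_V. lo v < hi v" and B: "\<forall>u\<in>M3_V. \<forall>v\<in>M3_V. u \<noteq> v \<longrightarrow> (M3_E u v \<longleftrightarrow> max (lo u) (lo v) < min (hi u) (hi v))"
    using assms unfolding irep_def by auto
  have l0: "lo 0 < hi 0" using A by (simp add: M3_V_def)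
  have l1: "lo 1 < hi 1" using A by (simp add: M3_V_def)
  have l2: "lo 2 < hi 2" using A by (simp add: M3_V_def)
  have l3: "lo 3 < hi 3" using A by (simp add: M3_V_def)
  have l4: "lo 4 < hi 4" using A by (simp add: M3_V_def)
  have l5: "lo 5 < hi 5" using A by (simp add: M3_V_def)
  have e01: "(max (lo 0) (lo 1) < min (hi 0) (hi 1))"
    using B[rule_format, of 0 1] by (simp add: M3_V_def M3_E_def doubleton_eq_iff)
  have e02: "(max (lo 0) (lo 2) < min (hi 0) (hi 2))"
    using B[rule_format, of 0 2] by (simp add: M3_V_def M3_E_def doubleton_eq_iff)
  have e03: "(max (lo 0) (lo 3) < min (hi 0) (hi 3))"
    using B[rule_format, of 0 3] by (simp add: M3_V_def M3_E_def doubleton_eq_iff)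
  have e04: "\<not> (max (lo 0) (lo 4) < min (hi 0) (hi 4))"
    using B[rule_format, of 0 4] by (simp add: M3_V_def M3_E_def doubleton_eq_iff)
  have e05: "\<not> (max (lo 0) (lo 5) < min (hi 0) (hi 5))"
    using B[rule_format, of 0 5] by (simp add: M3_V_def M3_E_def doubleton_eq_iff)
  have e12: "(max (lo 1) (lo 2) < min (hi 1) (hi 2))"
    using B[rule_format, of 1 2] by (simp add: M3_V_def M3_E_def doubleton_eq_iff)
  have e13: "\<not> (max (lo 1) (lo 3) < min (hi 1) (hi 3))"
    using B[rule_format, of 1 3] by (simp add: M3_V_def M3_E_def doubleton_eq_iff)
  have e14: "(max (lo 1) (lo 4) < min (hi 1) (hi 4))"
    using B[rule_format, of 1 4] by (simp add: M3_V_def M3_E_def doubleton_eq_iff)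
  have e15: "\<not> (max (lo 1) (lo 5) < min (hi 1) (hi 5))"
    using B[rule_format, of 1 5] by (simp add: M3_V_def M3_E_def doubleton_eq_iff)
  have e23: "\<not> (max (lo 2) (lo 3) < min (hi 2) (hi 3))"
    using B[rule_format, of 2 3] by (simp add: M3_V_def M3_E_def doubleton_eq_iff)
  have e24: "\<not> (max (lo 2) (lo 4) < min (hi 2) (hi 4))"
    using B[rule_format, of 2 4] by (simp add: M3_V_def M3_E_def doubleton_eq_iff)
  have e25: "(max (lo 2) (lo 5) < min (hi 2) (hi 5))"
    using B[rule_format, of 2 5] by (simp add: M3_V_def M3_E_def doubleton_eq_iff)
  have e34: "\<not> (max (lo 3) (lo 4) < min (hi 3) (hi 4))"
    using B[rule_format, of 3 4] by (simp add: M3_V_def M3_E_def doubleton_eq_iff)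
  have e35: "\<not> (max (lo 3) (lo 5) < min (hi 3) (hi 5))"
    using B[rule_format, of 3 5] by (simp add: M3_V_def M3_E_def doubleton_eq_iff)
  have e45: "\<not> (max (lo 4) (lo 5) < min (hi 4) (hi 5))"
    using B[rule_format, of 4 5] by (simp add: M3_V_def M3_E_def doubleton_eq_iff)
  show False using l0 l1 l2 l3 l4 l5 e01 e02 e03 e04 e05 e12 e13 e14 e15 e23 e24 e25 e34 e35 e45 unfolding max_def min_def by (smt (verit))
qed

lemma cycle_no_irep:
  assumes "irep (cycle_V r) (cycle_E r) lo hi" and r: "r \<ge> 4"
  shows False
proof -
  have A: "\<forall>v<r. lo v < hi v" and B: "\<forall>u<r. \<forall>v<r. u \<noteq> v \<longrightarrow> (cycle_E r u v \<longleftrightarrow> max (lo u) (lo v) < min (hi u) (hi v))"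
    using assms unfolding irep_def cycle_V_def by auto
  have fin: "finite (hi ` {..<r})" by simp
  have ne: "hi ` {..<r} \<noteq> {}" using r by (metis empty_iff image_is_empty lessThan_iff not_gr_zero not_numeral_le_zero)
  obtain t where t: "t < r" "hi t = Min (hi ` {..<r})" using Min_in[OF fin ne] by auto
  have tmin: "hi t \<le> hi s" if "s < r" for s using t(2) fin that by auto
  define u where "u = (if t + 1 = r then 0 else t + 1)"
  define w where "w = (if t = 0 then r - 1 else t - 1)"
  have u: "u < r" "u \<noteq> t" "cycle_E r t u" using t(1) r unfolding u_def cycle_E_def by auto
  have w: "w < r" "w \<noteq> t" "cycle_E r t w" using t(1) r unfolding w_def cycle_E_def by auto
  have uw: "u \<noteq> w" "\<not> cycle_E r u w" using t(1) r unfolding u_def w_def cycle_E_def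
    by (cases "Suc (Suc t) < r"; cases "Suc (Suc t) = r"; auto)+
  have "max (lo t) (lo u) < min (hi t) (hi u)" using B u t(1) by metis
  moreover have "max (lo t) (lo w) < min (hi t) (hi w)" using B w t(1) by metis
  moreover have "\<not> max (lo u) (lo w) < min (hi u) (hi w)" using B uw u(1) w(1) by metis
  moreover have "hi t \<le> hi u" "hi t \<le> hi w" using tmin u(1) w(1) by auto
  ultimately show False by linarith
qed

abbreviation RR :: "'b set \<Rightarrow> ('b \<Rightarrow> 'b \<Rightarrow> bool) \<Rightarrow> 'b \<Rightarrow> 'b \<Rightarrow> bool" where
  "RR VH EH \<equiv> (\<lambda>x y. EH x y \<and> x \<in> VH \<and> y \<in> VH)"

lemma cycle_conn: "r \<ge> 4 \<Longrightarrow> \<forall>v\<in>cycle_V r. (RR (cycle_V r) (cycle_E r))\<^sup>*\<^sup>* 0 v"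
proof
  fix v assume r: "r \<ge> 4" and v: "v \<in> cycle_V r"
  have "v < r \<Longrightarrow> (RR (cycle_V r) (cycle_E r))\<^sup>*\<^sup>* 0 v"
  proof (induction v)
    case 0 then show ?case by simp
  next
    case (Suc v)
    then have "RR (cycle_V r) (cycle_E r) v (Suc v)" by (auto simp: cycle_E_def cycle_V_def)
    moreover have "(RR (cycle_V r) (cycle_E r))\<^sup>*\<^sup>* 0 v" using Suc by simp
    ultimately show ?case using rtranclp.rtrancl_into_rtrancl[of "RR (cycle_V r) (cycle_E r)" 0 v "Suc v"] by blast
  qed
  then show "(RR (cycle_V r) (cycle_E r))\<^sup>*\<^sup>* 0 v" using v by (simp add: cycle_V_def)
qed

lemma M2_conn: "\<forall>v\<in>M2_V. (RR M2_V M2_E)\<^sup>*\<^sup>* 0 v"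
proof
  fix v assume "v \<in> M2_V"
  then have "v \<in> {0,1,2,3,4,5,6}" by (auto simp: M2_V_def)
  moreover have "RR M2_V M2_E 0 1" "RR M2_V M2_E 0 2" "RR M2_V M2_E 0 3" "RR M2_V M2_E 1 4"
    "RR M2_V M2_E 2 5" "RR M2_V M2_E 3 6"
    by (auto simp: M2_V_def M2_E_def)
  ultimately show "(RR M2_V M2_E)\<^sup>*\<^sup>* 0 v"
    by (auto intro: rtranclp.rtrancl_into_rtrancl r_into_rtranclp)
qed

lemma M3_conn: "\<forall>v\<in>M3_V. (RR M3_V M3_E)\<^sup>*\<^sup>* 0 v"
proof
  fix v assume "v \<in> M3_V"
  then have "v \<in> {0,1,2,3,4,5}" by (auto simp: M3_V_def)
  moreover have "RR M3_V M3_E 0 1" "RR M3_V M3_E 0 2" "RR M3_V M3_E 0 3" "RR M3_V M3_E 1 4"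
    "RR M3_V M3_E 2 5"
    by (auto simp: M3_V_def M3_E_def)
  ultimately show "(RR M3_V M3_E)\<^sup>*\<^sup>* 0 v"
    by (auto intro: rtranclp.rtrancl_into_rtrancl r_into_rtranclp)
qed

lemma forward:
  assumes "B0_EPG V E"
  shows "\<not> induced_subgraph M2_V M2_E V E \<and> \<not> induced_subgraph M3_V M3_E V E \<and>
     (\<forall>r\<ge>4. \<not> induced_subgraph (cycle_V r) (cycle_E r) V E)"
proof (intro conjI allI impI notI)
  assume "induced_subgraph M2_V M2_E V E"
  then have "B0_EPG M2_V M2_E" using B0_induced assms by blast
  then obtain lo hi where "irep M2_V M2_E lo hi" using B0_irep[OF _ _ M2_conn] by (auto simp: M2_V_def)
  then show False by (rule M2_no_irep)
next
  assume "induced_subgraph M3_V M3_E V E"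
  then have "B0_EPG M3_V M3_E" using B0_induced assms by blast
  then obtain lo hi where "irep M3_V M3_E lo hi" using B0_irep[OF _ _ M3_conn] by (auto simp: M3_V_def)
  then show False by (rule M3_no_irep)
next
  fix r :: nat assume r: "r \<ge> 4" and "induced_subgraph (cycle_V r) (cycle_E r) V E"
  then have "B0_EPG (cycle_V r) (cycle_E r)" using B0_induced assms by blast
  then obtain lo hi where "irep (cycle_V r) (cycle_E r) lo hi"
    using B0_irep[OF _ _ cycle_conn[OF r]] r by (auto simp: cycle_V_def)
  then show False using cycle_no_irep r by blast
qed

definition ipath :: "'a set \<Rightarrow> ('a \<Rightarrow> 'a \<Rightarrow> bool) \<Rightarrow> 'a list \<Rightarrow> bool" where
  "ipath V E qs \<longleftrightarrow> distinct qs \<and> set qs \<subseteq> V \<and>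
     (\<forall>a<length qs. \<forall>b<length qs. E (qs ! a) (qs ! b) \<longleftrightarrow> (a = Suc b \<or> b = Suc a))"

lemma ipath_take: "ipath V E qs \<Longrightarrow> ipath V E (take n qs)"
  unfolding ipath_def by (auto dest: in_set_takeD)

lemma ipath_drop: "ipath V E qs \<Longrightarrow> ipath V E (drop n qs)"
  unfolding ipath_def by (auto dest: in_set_dropD)

lemma ipath_rev: "ipath V E qs \<Longrightarrow> ipath V E (rev qs)"
  unfolding ipath_def
proof (intro conjI allI impI)
  assume A: "distinct qs \<and> set qs \<subseteq> V \<and>
    (\<forall>a<length qs. \<forall>b<length qs. E (qs ! a) (qs ! b) = (a = Suc b \<or> b = Suc a))"
  then show "distinct (rev qs)" "set (rev qs) \<subseteq> V" by auto
  fix a b assume ab: "a < length (rev qs)" "b < length (rev qs)"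
  then have "E (rev qs ! a) (rev qs ! b) = E (qs ! (length qs - Suc a)) (qs ! (length qs - Suc b))"
    by (simp add: rev_nth)
  also have "\<dots> = (length qs - Suc a = Suc (length qs - Suc b) \<or> length qs - Suc b = Suc (length qs - Suc a))"
    using A ab by auto
  also have "\<dots> = (a = Suc b \<or> b = Suc a)" using ab by auto
  finally show "E (rev qs ! a) (rev qs ! b) = (a = Suc b \<or> b = Suc a)" .
qed

lemma ipath_Cons:
  assumes "ipath V E qs" "qs \<noteq> []" "y \<in> V" "y \<notin> set qs" "E y (qs ! 0)"
    "\<And>t. 0 < t \<Longrightarrow> t < length qs \<Longrightarrow> \<not> E y (qs ! t)"
    "simple_graph V E"
  shows "ipath V E (y # qs)"
  unfolding ipath_def
proof (intro conjI allI impI)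
  show "distinct (y # qs)" "set (y # qs) \<subseteq> V" using assms unfolding ipath_def by auto
  have sym: "E u v \<Longrightarrow> E v u" and irr: "\<not> E u u" for u v using assms(7) unfolding simple_graph_def by auto
  fix a b assume ab: "a < length (y # qs)" "b < length (y # qs)"
  show "E ((y # qs) ! a) ((y # qs) ! b) = (a = Suc b \<or> b = Suc a)"
  proof (cases a)
    case 0
    then show ?thesis
    proof (cases b)
      case 0 then show ?thesis using \<open>a = 0\<close> irr by simp
    next
      case (Suc b') then show ?thesis using \<open>a = 0\<close> assms(5,6) ab by (cases b') auto
    qed
  next
    case (Suc a')
    then show ?thesis
    proof (cases b)
      case 0 then show ?thesis using \<open>a = Suc a'\<close> assms(5,6) ab sym by (cases a') auto
    next
      case (Suc b') then show ?thesis using \<open>a = Suc a'\<close> assms(1) ab unfolding ipath_def by auto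
    qed
  qed
qed

lemma mod_Suc_lt: "u < r \<Longrightarrow> Suc u mod r = (if Suc u = r then 0 else Suc u)"
  by auto

lemma close_cycle:
  assumes "ipath V E qs" "length qs \<ge> 3" "y \<in> V" "y \<notin> set qs" "E y (qs ! 0)"
    "E y (qs ! (length qs - 1))"
    "\<And>t. 0 < t \<Longrightarrow> t < length qs - 1 \<Longrightarrow> \<not> E y (qs ! t)"
    "simple_graph V E"
  shows "induced_subgraph (cycle_V (Suc (length qs))) (cycle_E (Suc (length qs))) V E"
  unfolding induced_subgraph_def
proof (intro exI[of _ "\<lambda>i. (y # qs) ! i"] conjI ballI)
  have sym: "E u v \<Longrightarrow> E v u" and irr: "\<not> E u u" for u v using assms(8) unfolding simple_graph_def by auto
  have dq: "distinct (y # qs)" using assms unfolding ipath_def by auto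
  show "inj_on (\<lambda>i. (y # qs) ! i) (cycle_V (Suc (length qs)))"
    using dq unfolding cycle_V_def inj_on_def by (simp add: nth_eq_iff_index_eq del: nth_Cons)
  show "(\<lambda>i. (y # qs) ! i) ` cycle_V (Suc (length qs)) \<subseteq> V"
  proof -
    have "set (y # qs) \<subseteq> V" using assms unfolding ipath_def by auto
    then show ?thesis unfolding cycle_V_def using nth_mem[of _ "y # qs"] by (metis image_subset_iff length_Cons lessThan_iff subset_iff)
  qed
  fix u v assume uv: "u \<in> cycle_V (Suc (length qs))" "v \<in> cycle_V (Suc (length qs))"
  define r where "r = Suc (length qs)"
  have u: "u < r" and v: "v < r" using uv unfolding cycle_V_def r_def by auto
  have P: "\<And>a b. a < length qs \<Longrightarrow> b < length qs \<Longrightarrow> E (qs ! a) (qs ! b) = (a = Suc b \<or> b = Suc a)"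
    using assms(1) unfolding ipath_def by blast
  have Y: "\<And>t. t < length qs \<Longrightarrow> E y (qs ! t) = (t = 0 \<or> t = length qs - 1)"
  proof -
    fix t assume t: "t < length qs"
    show "E y (qs ! t) = (t = 0 \<or> t = length qs - 1)"
    proof (cases "t = 0 \<or> t = length qs - 1")
      case True then show ?thesis using assms(5,6) by auto
    next
      case False then have "0 < t" "t < length qs - 1" using t by auto
      then show ?thesis using assms(7) False by blast
    qed
  qed
  have "cycle_E r u v = (u \<noteq> v \<and> (v = (if Suc u = r then 0 else Suc u) \<or> u = (if Suc v = r then 0 else Suc v)))"
    unfolding cycle_E_def using u v by (simp add: mod_Suc_lt)
  also have "\<dots> = E ((y # qs) ! u) ((y # qs) ! v)"
  proof (cases u)
    case 0
    then show ?thesis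
    proof (cases v)
      case 0 then show ?thesis using \<open>u = 0\<close> irr by simp
    next
      case (Suc b) then show ?thesis using \<open>u = 0\<close> Y[of b] v assms(2) unfolding r_def by auto
    qed
  next
    case (Suc a)
    then show ?thesis
    proof (cases v)
      case 0 then show ?thesis using \<open>u = Suc a\<close> Y[of a] u assms(2) sym unfolding r_def by auto
    next
      case (Suc b)
      have ab: "a < length qs" "b < length qs" using u v \<open>u = Suc a\<close> \<open>v = Suc b\<close> unfolding r_def by auto
      have "E (qs ! a) (qs ! b) = (a = Suc b \<or> b = Suc a)" using P[OF ab] .
      then show ?thesis unfolding \<open>u = Suc a\<close> \<open>v = Suc b\<close> nth_Cons_Suc using ab irr unfolding r_def
        by (cases "Suc a = length qs"; cases "Suc b = length qs"; auto)
    qed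
  qed
  finally show "cycle_E (Suc (length qs)) u v = E ((y # qs) ! u) ((y # qs) ! v)" unfolding r_def .
qed

definition tri :: "'a set \<Rightarrow> ('a \<Rightarrow> 'a \<Rightarrow> bool) \<Rightarrow> 'a \<Rightarrow> 'a \<Rightarrow> 'a \<Rightarrow> bool" where
  "tri V E a b c \<longleftrightarrow> a \<in> V \<and> b \<in> V \<and> c \<in> V \<and> E a b \<and> E b c \<and> E c a"

lemma less3: "(i::nat) < 3 \<longleftrightarrow> i = 0 \<or> i = 1 \<or> i = 2" by auto

lemma tri_cycle:
  assumes "tri V E a b c" "simple_graph V E"
  shows "simple_cycle V E [a, b, c]" "cycle_edges [a, b, c] = {{a, b}, {b, c}, {c, a}}"
proof -
  have irr: "\<not> E u u" for u using assms(2) unfolding simple_graph_def by auto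
  have d: "distinct [a, b, c]" using assms(1) irr unfolding tri_def by auto
  show "simple_cycle V E [a, b, c]" unfolding simple_cycle_def using d assms(1) unfolding tri_def
    by (auto simp: less_Suc_eq)
  have G: "{g i | i. i < Suc (Suc (Suc 0))} = {g 0, g 1, g 2}" for g :: "nat \<Rightarrow> 'a set"
  proof -
    have "{i. i < Suc (Suc (Suc 0))} = {0, 1, 2}" by auto
    moreover have "{g i | i. i < Suc (Suc (Suc 0))} = g ` {i. i < Suc (Suc (Suc 0))}" by blast
    ultimately show ?thesis by simp
  qed
  show "cycle_edges [a, b, c] = {{a, b}, {b, c}, {c, a}}" unfolding cycle_edges_def
    using G[of "\<lambda>i. {[a, b, c] ! i, [a, b, c] ! ((i + 1) mod 3)}"] by (simp add: numeral_2_eq_2 insert_commute)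
qed

lemma tri_contra:
  assumes "cactus V E" "simple_graph V E" "tri V E a b c" "tri V E a' b' c'"
    "x \<noteq> y" "x \<in> {a, b, c}" "y \<in> {a, b, c}" "x \<in> {a', b', c'}" "y \<in> {a', b', c'}"
    "{a, b} \<notin> {{a', b'}, {b', c'}, {c', a'}}"
  shows False
proof -
  have C1: "simple_cycle V E [a, b, c]" and C2: "simple_cycle V E [a', b', c']"
    and E1: "cycle_edges [a, b, c] = {{a, b}, {b, c}, {c, a}}"
    and E2: "cycle_edges [a', b', c'] = {{a', b'}, {b', c'}, {c', a'}}"
    using tri_cycle[OF assms(3,2)] tri_cycle[OF assms(4,2)] by simp_all
  have "{a, b} \<in> cycle_edges [a, b, c]" using E1 by simp
  moreover have "{a, b} \<notin> cycle_edges [a', b', c']" using E2 assms(10) by simp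
  ultimately have ne: "cycle_edges [a, b, c] \<noteq> cycle_edges [a', b', c']" by blast
  have "card (set [a, b, c] \<inter> set [a', b', c']) \<le> 1"
  proof -
    have "\<forall>xs ys. simple_cycle V E xs \<and> simple_cycle V E ys \<and> cycle_edges xs \<noteq> cycle_edges ys
        \<longrightarrow> card (set xs \<inter> set ys) \<le> 1" using assms(1) unfolding cactus_def by blast
    then show ?thesis using C1 C2 ne by blast
  qed
  moreover have "{x, y} \<subseteq> set [a, b, c] \<inter> set [a', b', c']" using assms(6-9) by auto
  then have "card {x, y} \<le> card (set [a, b, c] \<inter> set [a', b', c'])" by (intro card_mono) auto
  ultimately show False using assms(5) by auto
qed

lemma M2_embed:
  assumes "simple_graph V E" "distinct [a, b, c, d, e, f, g]" "set [a, b, c, d, e, f, g] \<subseteq> V" "E a b" "E a c" "E a d" "E b e" "E c f" "E d g" "\<not> E a e" "\<not> E a f" "\<not> E a g" "\<not> E b c" "\<not> E b d" "\<not> E b f" "\<not> E b g" "\<not> E c d" "\<not> E c e" "\<not> E c g" "\<not> E d e" "\<not> E d f" "\<not> E e f" "\<not> E e g" "\<not> E f g"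
  shows "induced_subgraph M2_V M2_E V E"
  unfolding induced_subgraph_def
proof (intro exI[of _ "\<lambda>i. [a, b, c, d, e, f, g] ! i"] conjI)
  have sym: "\<And>u v. E u v \<Longrightarrow> E v u" and irr: "\<And>u. \<not> E u u" using assms(1) unfolding simple_graph_def by auto
  have VV: "M2_V = {0, 1, 2, 3, 4, 5, 6}" by (auto simp: M2_V_def)
  show "inj_on (\<lambda>i. [a, b, c, d, e, f, g] ! i) M2_V" using assms(2) unfolding VV by (auto simp: inj_on_def)
  show "(\<lambda>i. [a, b, c, d, e, f, g] ! i) ` M2_V \<subseteq> V" using assms(3) unfolding VV by simp
  have S: "\<not> E y x" if "\<not> E x y" for x y using that sym by blast
  show "\<forall>u\<in>M2_V. \<forall>v\<in>M2_V. M2_E u v \<longleftrightarrow> E ([a, b, c, d, e, f, g] ! u) ([a, b, c, d, e, f, g] ! v)"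
    unfolding VV using assms(4-) assms(10-)[THEN S] assms(4-9)[THEN sym] irr
    by (simp add: M2_E_def doubleton_eq_iff numeral_eq_Suc)
qed

lemma M3_embed:
  assumes "simple_graph V E" "distinct [a, b, c, d, e, f]" "set [a, b, c, d, e, f] \<subseteq> V" "E a b" "E a c" "E b c" "E a d" "E b e" "E c f" "\<not> E a e" "\<not> E a f" "\<not> E b d" "\<not> E b f" "\<not> E c d" "\<not> E c e" "\<not> E d e" "\<not> E d f" "\<not> E e f"
  shows "induced_subgraph M3_V M3_E V E"
  unfolding induced_subgraph_def
proof (intro exI[of _ "\<lambda>i. [a, b, c, d, e, f] ! i"] conjI)
  have sym: "\<And>u v. E u v \<Longrightarrow> E v u" and irr: "\<And>u. \<not> E u u" using assms(1) unfolding simple_graph_def by auto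
  have VV: "M3_V = {0, 1, 2, 3, 4, 5}" by (auto simp: M3_V_def)
  show "inj_on (\<lambda>i. [a, b, c, d, e, f] ! i) M3_V" using assms(2) unfolding VV by (auto simp: inj_on_def)
  show "(\<lambda>i. [a, b, c, d, e, f] ! i) ` M3_V \<subseteq> V" using assms(3) unfolding VV by simp
  have S: "\<not> E y x" if "\<not> E x y" for x y using that sym by blast
  show "\<forall>u\<in>M3_V. \<forall>v\<in>M3_V. M3_E u v \<longleftrightarrow> E ([a, b, c, d, e, f] ! u) ([a, b, c, d, e, f] ! v)"
    unfolding VV using assms(4-) assms(10-)[THEN S] assms(4-9)[THEN sym] irr
    by (simp add: M3_E_def doubleton_eq_iff numeral_eq_Suc)
qed

locale cs =
  fixes V :: "'a set" and E :: "'a \<Rightarrow> 'a \<Rightarrow> bool" and ps :: "'a list"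
  assumes sg: "simple_graph V E" and cac: "cactus V E"
    and noM2: "\<not> induced_subgraph M2_V M2_E V E"
    and noM3: "\<not> induced_subgraph M3_V M3_E V E"
    and noC: "\<forall>r\<ge>4. \<not> induced_subgraph (cycle_V r) (cycle_E r) V E"
    and ip: "ipath V E ps" and ne: "ps \<noteq> []"
    and longest: "\<And>qs. ipath V E qs \<Longrightarrow> length qs \<le> length ps"
begin

abbreviation "L \<equiv> length ps"

lemma sym: "E u v \<Longrightarrow> E v u" and irr: "\<not> E u u" and inV: "E u v \<Longrightarrow> u \<in> V" "E u v \<Longrightarrow> v \<in> V"
  using sg unfolding simple_graph_def by auto

lemma pathE: "a < L \<Longrightarrow> b < L \<Longrightarrow> E (ps ! a) (ps ! b) \<longleftrightarrow> (a = Suc b \<or> b = Suc a)"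
  using ip unfolding ipath_def by blast

lemma dps: "distinct ps" using ip unfolding ipath_def by blast

lemma ps_eq: "a < L \<Longrightarrow> b < L \<Longrightarrow> ps ! a = ps ! b \<longleftrightarrow> a = b"
  using dps by (simp add: nth_eq_iff_index_eq)

lemma ps_in: "a < L \<Longrightarrow> ps ! a \<in> V" using ip nth_mem unfolding ipath_def by blast

lemma notin_nth: "x \<notin> set ps \<Longrightarrow> k < L \<Longrightarrow> ps ! k \<noteq> x" "x \<notin> set ps \<Longrightarrow> k < L \<Longrightarrow> x \<noteq> ps ! k"
  using nth_mem by auto

lemma seg_cycle_contra:
  assumes x: "x \<in> V" "x \<notin> set ps" and ij: "i + 2 \<le> j" "j < L" and e: "E x (ps ! i)" "E x (ps ! j)"
    and btw: "\<And>l. i < l \<Longrightarrow> l < j \<Longrightarrow> \<not> E x (ps ! l)"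
  shows False
proof -
  define qs where "qs = take (Suc j - i) (drop i ps)"
  have ipq: "ipath V E qs" unfolding qs_def by (intro ipath_take ipath_drop ip)
  have len: "length qs = Suc j - i" unfolding qs_def using ij by auto
  have nth: "t < Suc j - i \<Longrightarrow> qs ! t = ps ! (i + t)" for t unfolding qs_def using ij by auto
  have xq: "x \<notin> set qs" unfolding qs_def using x(2) by (meson in_set_dropD in_set_takeD)
  have "induced_subgraph (cycle_V (Suc (length qs))) (cycle_E (Suc (length qs))) V E"
  proof (rule close_cycle[OF ipq _ x(1) xq _ _ _ sg])
    show "3 \<le> length qs" using len ij by auto
    show "E x (qs ! 0)" using nth[of 0] e(1) ij by auto
    show "E x (qs ! (length qs - 1))" using nth[of "j - i"] e(2) ij len by auto
    fix t assume "0 < t" "t < length qs - 1"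
    then show "\<not> E x (qs ! t)" using nth[of t] btw[of "i + t"] len by auto
  qed
  moreover have "Suc (length qs) \<ge> 4" using len ij by auto
  ultimately show False using noC by blast
qed

definition hasatt :: "'a \<Rightarrow> bool" where "hasatt x \<longleftrightarrow> (\<exists>i<L. E x (ps ! i))"
definition att :: "'a \<Rightarrow> nat" where "att x = (LEAST i. i < L \<and> E x (ps ! i))"
definition apex :: "'a \<Rightarrow> bool" where "apex x \<longleftrightarrow> Suc (att x) < L \<and> E x (ps ! Suc (att x))"

lemma att_basic:
  assumes "hasatt x"
  shows "att x < L" "E x (ps ! att x)" "\<And>i. i < L \<Longrightarrow> E x (ps ! i) \<Longrightarrow> att x \<le> i"
proof -
  obtain i where "i < L \<and> E x (ps ! i)" using assms unfolding hasatt_def by blast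
  then have "att x < L \<and> E x (ps ! att x)" unfolding att_def by (rule LeastI)
  then show "att x < L" "E x (ps ! att x)" by auto
  fix i assume "i < L" "E x (ps ! i)"
  then show "att x \<le> i" unfolding att_def by (simp add: Least_le)
qed

lemma tri_path: "Suc i < L \<Longrightarrow> x \<in> V \<Longrightarrow> E x (ps ! i) \<Longrightarrow> E x (ps ! Suc i) \<Longrightarrow> tri V E x (ps ! i) (ps ! Suc i)"
  unfolding tri_def using ps_in pathE[of i "Suc i"] sym by auto

lemma F2:
  assumes x: "x \<in> V" "x \<notin> set ps" "hasatt x" and a: "a < L" "E x (ps ! a)"
  shows "a = att x \<or> (a = Suc (att x) \<and> apex x)"
proof (rule ccontr)
  assume C: "\<not> (a = att x \<or> (a = Suc (att x) \<and> apex x))"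
  define i where "i = att x"
  have i: "i < L" "E x (ps ! i)" "i \<le> a" using att_basic[OF x(3)] a unfolding i_def by auto
  have a2: "i + 2 \<le> a" using C i a unfolding apex_def i_def[symmetric] by (cases "a = Suc i") auto
  define j where "j = (LEAST j. i + 2 \<le> j \<and> j < L \<and> E x (ps ! j))"
  have jP: "i + 2 \<le> j \<and> j < L \<and> E x (ps ! j)" unfolding j_def by (rule LeastI[of _ a]) (use a2 a in auto)
  have jmin: "\<And>l. i + 2 \<le> l \<Longrightarrow> l < L \<Longrightarrow> E x (ps ! l) \<Longrightarrow> j \<le> l" unfolding j_def by (simp add: Least_le)
  show False
  proof (cases "E x (ps ! Suc i)")
    case True
    show False
    proof (cases "j = i + 2")
      case True
      have t1: "tri V E x (ps ! i) (ps ! Suc i)" using tri_path[of i x] i True x jP \<open>E x (ps ! Suc i)\<close> by auto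
      have t2: "tri V E x (ps ! Suc i) (ps ! Suc (Suc i))" using tri_path[of "Suc i" x] jP True x \<open>E x (ps ! Suc i)\<close> by auto
      show False
      proof (rule tri_contra[OF cac sg t1 t2, of x "ps ! Suc i"])
        show "x \<noteq> ps ! Suc i" using notin_nth x jP by auto
        show "{x, ps ! i} \<notin> {{x, ps ! Suc i}, {ps ! Suc i, ps ! Suc (Suc i)}, {ps ! Suc (Suc i), x}}"
          using ps_eq[of i "Suc i"] ps_eq[of i "Suc (Suc i)"] jP True notin_nth[OF x(2)]
          by (auto simp: doubleton_eq_iff)
      qed auto
    next
      case False
      show False
      proof (rule seg_cycle_contra[OF x(1,2), of "Suc i" j])
        show "Suc i + 2 \<le> j" using False jP by auto
      next
        fix l assume "Suc i < l" "l < j"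
        then show "\<not> E x (ps ! l)" using jmin[of l] jP by fastforce
      qed (use jP \<open>E x (ps ! Suc i)\<close> in auto)
    qed
  next
    case False
    show False
    proof (rule seg_cycle_contra[OF x(1,2) _ _ i(2), of j])
      fix l assume "i < l" "l < j"
      then show "\<not> E x (ps ! l)" using jmin[of l] jP False by (cases "l = Suc i") fastforce+
    qed (use jP in auto)
  qed
qed

lemma F2': "x \<in> V \<Longrightarrow> x \<notin> set ps \<Longrightarrow> hasatt x \<Longrightarrow> a < L \<Longrightarrow>
   E x (ps ! a) \<longleftrightarrow> (a = att x \<or> (a = Suc (att x) \<and> apex x))"
  using F2 att_basic unfolding apex_def by blast

end

lemma crossing:
  assumes "R\<^sup>*\<^sup>* a b" "a \<in> S" "b \<notin> S"
  shows "\<exists>x y. R x y \<and> x \<in> S \<and> y \<notin> S"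
  using assms by (induction rule: rtranclp_induct) auto

context cs begin

lemma ext2:
  assumes "ipath V E qs" "qs \<noteq> []" "y \<in> V" "z \<in> V" "y \<notin> set qs" "z \<notin> set qs" "z \<noteq> y"
    "E y (qs ! 0)" "\<And>t. 0 < t \<Longrightarrow> t < length qs \<Longrightarrow> \<not> E y (qs ! t)"
    "E z y" "\<And>t. t < length qs \<Longrightarrow> \<not> E z (qs ! t)"
  shows "ipath V E (z # y # qs)"
proof -
  have 1: "ipath V E (y # qs)" by (rule ipath_Cons[OF assms(1,2,3,5,8,9) sg])
  show ?thesis
  proof (rule ipath_Cons[OF 1 _ assms(4) _ _ _ sg])
    show "z \<notin> set (y # qs)" using assms(6,7) by auto
    show "E z ((y # qs) ! 0)" using assms(10) by simp
    fix t assume "0 < t" "t < length (y # qs)"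
    then show "\<not> E z ((y # qs) ! t)" using assms(11)[of "t - 1"] by (cases t) auto
  qed simp
qed

lemma drop_facts: "i < L \<Longrightarrow> drop i ps \<noteq> [] \<and> length (drop i ps) = L - i \<and> (\<forall>t < L - i. drop i ps ! t = ps ! (i + t))"
  by auto

lemma revtake_facts: "i < L \<Longrightarrow> rev (take (Suc i) ps) \<noteq> [] \<and> length (rev (take (Suc i) ps)) = Suc i \<and>
   (\<forall>t < Suc i. rev (take (Suc i) ps) ! t = ps ! (i - t))"
  by (auto simp: rev_nth)

lemma allatt:
  assumes v: "v \<in> V" "v \<notin> set ps"
  shows "hasatt v"
proof (rule ccontr)
  assume nv: "\<not> hasatt v"
  define S where "S = set ps \<union> {x \<in> V. hasatt x}"
  have "graph_connected V E" using cac unfolding cactus_def by blast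
  moreover have "ps ! 0 \<in> V" using ps_in ne by auto
  ultimately have "(\<lambda>x y. E x y \<and> x \<in> V \<and> y \<in> V)\<^sup>*\<^sup>* (ps ! 0) v" using v unfolding graph_connected_def by blast
  moreover have "ps ! 0 \<in> S" using ne unfolding S_def by auto
  moreover have "v \<notin> S" using v nv unfolding S_def by auto
  ultimately obtain y z where yz: "E y z" "y \<in> V" "z \<in> V" "y \<in> S" "z \<notin> S"
    using crossing[of _ "ps ! 0" v S] by blast
  have z: "z \<notin> set ps" "\<not> hasatt z" using yz unfolding S_def by auto
  have Ez: "\<And>a. a < L \<Longrightarrow> \<not> E z (ps ! a)" using z unfolding hasatt_def by auto
  have y: "y \<notin> set ps"
  proof
    assume "y \<in> set ps"
    then obtain k where "k < L" "ps ! k = y" by (auto simp: in_set_conv_nth)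
    then show False using Ez sym yz(1) by blast
  qed
  have yh: "hasatt y" using yz y unfolding S_def by auto
  have zy: "z \<noteq> y" using yz(1) irr by auto
  define i where "i = att y"
  have iL: "i < L" using att_basic[OF yh] unfolding i_def by auto
  have Ey: "\<And>a. a < L \<Longrightarrow> E y (ps ! a) \<longleftrightarrow> (a = i \<or> (a = Suc i \<and> apex y))"
    using F2'[OF yz(2) y yh] unfolding i_def by blast
  have Ezy: "E z y" using sym yz(1) by blast
  have Ez2: "\<And>a. a < L \<Longrightarrow> \<not> E (ps ! a) z" using Ez sym by blast
  have Ey2: "\<And>a. a < L \<Longrightarrow> E (ps ! a) y \<longleftrightarrow> (a = i \<or> (a = Suc i \<and> apex y))" using Ey sym by blast
  have long: False if "ipath V E qs" "length qs > L" for qs using longest[OF that(1)] that(2) by auto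
  have sv: "ps ! k \<in> V" "ps ! k \<noteq> y" "ps ! k \<noteq> z" "y \<noteq> ps ! k" "z \<noteq> ps ! k" if "k < L" for k
    using ps_in that notin_nth y z(1) by auto
  show False
  proof (cases "apex y")
    case False
    then have Ey': "\<And>a. a < L \<Longrightarrow> E y (ps ! a) \<longleftrightarrow> a = i" using Ey by auto
    have Ey3: "\<And>a. a < L \<Longrightarrow> E (ps ! a) y \<longleftrightarrow> a = i" using Ey2 False by auto
    consider "i \<le> 1" | "L \<le> i + 2" | "2 \<le> i" "i + 3 \<le> L" by linarith
    then show False
    proof cases
      case 1
      have D: "drop i ps \<noteq> []" "length (drop i ps) = L - i" "\<And>t. t < L - i \<Longrightarrow> drop i ps ! t = ps ! (i + t)"
        using drop_facts[OF iL] by auto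
      have "ipath V E (z # y # drop i ps)"
      proof (rule ext2[OF ipath_drop[OF ip] D(1) yz(2,3) _ _ zy _ _ Ezy])
        show "y \<notin> set (drop i ps)" "z \<notin> set (drop i ps)" using y z by (auto dest: in_set_dropD)
        show "E y (drop i ps ! 0)" using D Ey' iL by auto
        fix t
        show "0 < t \<Longrightarrow> t < length (drop i ps) \<Longrightarrow> \<not> E y (drop i ps ! t)" using D Ey' by auto
        show "t < length (drop i ps) \<Longrightarrow> \<not> E z (drop i ps ! t)" using D Ez by auto
      qed
      then show False using long D 1 iL by fastforce
    next
      case 2
      have D: "rev (take (Suc i) ps) \<noteq> []" "length (rev (take (Suc i) ps)) = Suc i"
        "\<And>t. t < Suc i \<Longrightarrow> rev (take (Suc i) ps) ! t = ps ! (i - t)"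
        using revtake_facts[OF iL] by auto
      have "ipath V E (z # y # rev (take (Suc i) ps))"
      proof (rule ext2[OF ipath_rev[OF ipath_take[OF ip]] D(1) yz(2,3) _ _ zy _ _ Ezy])
        show "y \<notin> set (rev (take (Suc i) ps))" "z \<notin> set (rev (take (Suc i) ps))" using y z by (auto dest: in_set_takeD)
        show "E y (rev (take (Suc i) ps) ! 0)" using D Ey' iL by auto
        fix t
        show "0 < t \<Longrightarrow> t < length (rev (take (Suc i) ps)) \<Longrightarrow> \<not> E y (rev (take (Suc i) ps) ! t)" using D Ey' iL by auto
        show "t < length (rev (take (Suc i) ps)) \<Longrightarrow> \<not> E z (rev (take (Suc i) ps) ! t)" using D Ez iL by auto
      qed
      then show False using long D 2 iL by fastforce
    next
      case 3
      obtain m where m: "i = m + 2" using 3 by (metis add.commute le_Suc_ex)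
      have mL: "m + 5 \<le> L" using 3 m by auto
      have "induced_subgraph M2_V M2_E V E"
        apply (rule M2_embed[OF sg, of "ps ! (m + 2)" "ps ! (m + 1)" "ps ! (m + 3)" y "ps ! m" "ps ! (m + 4)" z])
        using mL zy Ezy yz(1) y z(1) yz(2,3) unfolding m
        by (simp_all add: pathE ps_eq Ey' Ey3 Ez Ez2 notin_nth ps_in m)
      then show False using noM2 by blast
    qed
  next
    case True
    then have i1: "Suc i < L" unfolding apex_def i_def by auto
    consider "i = 0" | "L = i + 2" | "1 \<le> i" "i + 3 \<le> L" using i1 by linarith
    then show False
    proof cases
      case 1
      have D: "drop 1 ps \<noteq> []" "length (drop 1 ps) = L - 1" "\<And>t. t < L - 1 \<Longrightarrow> drop 1 ps ! t = ps ! (1 + t)"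
        using drop_facts[of 1] i1 1 by auto
      have "ipath V E (z # y # drop 1 ps)"
      proof (rule ext2[OF ipath_drop[OF ip] D(1) yz(2,3) _ _ zy _ _ Ezy])
        show "y \<notin> set (drop 1 ps)" "z \<notin> set (drop 1 ps)" using y z by (auto dest: in_set_dropD)
        show "E y (drop 1 ps ! 0)" using D Ey True i1 1 by auto
        fix t
        show "0 < t \<Longrightarrow> t < length (drop 1 ps) \<Longrightarrow> \<not> E y (drop 1 ps ! t)" using D Ey 1 by auto
        show "t < length (drop 1 ps) \<Longrightarrow> \<not> E z (drop 1 ps ! t)" using D Ez by auto
      qed
      then show False using long D i1 by fastforce
    next
      case 2
      have D: "rev (take (Suc i) ps) \<noteq> []" "length (rev (take (Suc i) ps)) = Suc i"
        "\<And>t. t < Suc i \<Longrightarrow> rev (take (Suc i) ps) ! t = ps ! (i - t)"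
        using revtake_facts[OF iL] by auto
      have "ipath V E (z # y # rev (take (Suc i) ps))"
      proof (rule ext2[OF ipath_rev[OF ipath_take[OF ip]] D(1) yz(2,3) _ _ zy _ _ Ezy])
        show "y \<notin> set (rev (take (Suc i) ps))" "z \<notin> set (rev (take (Suc i) ps))" using y z by (auto dest: in_set_takeD)
        show "E y (rev (take (Suc i) ps) ! 0)" using D Ey iL by auto
        fix t
        show "0 < t \<Longrightarrow> t < length (rev (take (Suc i) ps)) \<Longrightarrow> \<not> E y (rev (take (Suc i) ps) ! t)" using D Ey iL by auto
        show "t < length (rev (take (Suc i) ps)) \<Longrightarrow> \<not> E z (rev (take (Suc i) ps) ! t)" using D Ez iL by auto
      qed
      then show False using long D 2 iL by fastforce
    next
      case 3
      obtain m where m: "i = m + 1" using 3 by (metis add.commute le_Suc_ex)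
      have mL: "m + 4 \<le> L" using 3 m by auto
      have "induced_subgraph M3_V M3_E V E"
        apply (rule M3_embed[OF sg, of "ps ! (m + 1)" "ps ! (m + 2)" y "ps ! m" "ps ! (m + 3)" z])
        using mL zy Ezy yz(1) y z(1) yz(2,3) True unfolding m
        by (simp_all add: pathE ps_eq Ey Ey2 Ez Ez2 notin_nth ps_in m)
      then show False using noM3 by blast
    qed
  qed
qed

end

context cs begin

definition off :: "'a \<Rightarrow> bool" where "off x \<longleftrightarrow> x \<in> V \<and> x \<notin> set ps"

lemma offE: "off x \<Longrightarrow> a < L \<Longrightarrow> E x (ps ! a) \<longleftrightarrow> (a = att x \<or> (a = Suc (att x) \<and> apex x))"
  unfolding off_def using F2' allatt by blast

lemma offE2: "off x \<Longrightarrow> a < L \<Longrightarrow> E (ps ! a) x \<longleftrightarrow> (a = att x \<or> (a = Suc (att x) \<and> apex x))"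
  using offE sym by blast

lemma off_att: "off x \<Longrightarrow> att x < L" and off_apex: "off x \<Longrightarrow> apex x \<Longrightarrow> Suc (att x) < L"
  unfolding off_def using allatt att_basic apex_def by blast+

lemma off_ne: "off x \<Longrightarrow> a < L \<Longrightarrow> ps ! a \<noteq> x" "off x \<Longrightarrow> a < L \<Longrightarrow> x \<noteq> ps ! a"
  unfolding off_def using notin_nth by auto

lemma common_not_apex:
  assumes x: "off x" and y: "off y" and xy: "E x y" and a: "a < L" "E x (ps ! a)" "E y (ps ! a)"
  shows "\<not> apex x"
proof
  assume ax: "apex x"
  define i where "i = att x"
  have i: "Suc i < L" using off_apex[OF x ax] unfolding i_def .
  have ai: "a = i \<or> a = Suc i" using offE[OF x a(1)] a(2) unfolding i_def by auto
  define q where "q = (if a = i then Suc i else i)"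
  have q: "q < L" "E x (ps ! q)" "E (ps ! a) (ps ! q)" "q \<noteq> a"
    using offE[OF x] ax i ai pathE[of a q] unfolding q_def i_def by auto
  have xV: "x \<in> V" "y \<in> V" using x y unfolding off_def by auto
  have t1: "tri V E x y (ps ! a)" unfolding tri_def using xV ps_in a xy sym by auto
  have t2: "tri V E x (ps ! a) (ps ! q)" unfolding tri_def using xV ps_in a q sym by auto
  show False
  proof (rule tri_contra[OF cac sg t1 t2, of x "ps ! a"])
    show "x \<noteq> ps ! a" using off_ne[OF x a(1)] by auto
    show "{x, y} \<notin> {{x, ps ! a}, {ps ! a, ps ! q}, {ps ! q, x}}"
      using off_ne[OF y a(1)] off_ne[OF y q(1)] off_ne[OF x a(1)] xy irr by (auto simp: doubleton_eq_iff)
  qed auto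
qed

lemma nocommon_lt:
  assumes x: "off x" and y: "off y" and xy: "E x y" and nc: "\<And>a. a < L \<Longrightarrow> E x (ps ! a) \<Longrightarrow> \<not> E y (ps ! a)"
    and lt: "att x < att y"
  shows False
proof -
  define i where "i = att x"
  define j where "j = att y"
  define a where "a = (if apex x then Suc i else i)"
  have jL: "j < L" using off_att[OF y] unfolding j_def .
  have ea: "E x (ps ! a)" "a < L" using offE[OF x] off_apex[OF x] off_att[OF x] unfolding a_def i_def by auto
  have ej: "E y (ps ! j)" using offE[OF y jL] unfolding j_def by auto
  have aj: "a < j"
  proof -
    have "a \<le> j" using lt unfolding a_def i_def j_def by auto
    moreover have "a \<noteq> j" using nc[OF ea(2) ea(1)] ej by auto
    ultimately show ?thesis by auto
  qed
  define sq where "sq = take (Suc j - a) (drop a ps)"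
  have ips: "ipath V E sq" unfolding sq_def by (intro ipath_take ipath_drop ip)
  have lsq: "length sq = Suc j - a" unfolding sq_def using jL aj by auto
  have nsq: "t < Suc j - a \<Longrightarrow> sq ! t = ps ! (a + t)" for t unfolding sq_def using jL aj by auto
  have xV: "x \<in> V" "x \<notin> set ps" "y \<in> V" "y \<notin> set ps" using x y unfolding off_def by auto
  have xsq: "x \<notin> set sq" "y \<notin> set sq" unfolding sq_def using xV by (meson in_set_dropD in_set_takeD)+
  have xattle: "\<And>l. l < L \<Longrightarrow> E x (ps ! l) \<Longrightarrow> l \<le> a" using offE[OF x] unfolding a_def i_def by auto
  have yattge: "\<And>l. l < L \<Longrightarrow> E y (ps ! l) \<Longrightarrow> j \<le> l" using offE[OF y] unfolding j_def by auto
  define qs where "qs = x # sq"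
  have ipq: "ipath V E qs" unfolding qs_def
  proof (rule ipath_Cons[OF ips _ xV(1) xsq(1) _ _ sg])
    show "sq \<noteq> []" using lsq aj by auto
    show "E x (sq ! 0)" using nsq[of 0] ea aj by auto
    fix t
    assume "0 < t" "t < length sq"
    then have "a + t < L" "t < Suc j - a" using lsq aj jL by auto
    then show "\<not> E x (sq ! t)" using nsq[of t] xattle[of "a + t"] \<open>0 < t\<close> by auto
  qed
  have lq: "length qs = Suc (Suc j - a)" unfolding qs_def using lsq by auto
  have "induced_subgraph (cycle_V (Suc (length qs))) (cycle_E (Suc (length qs))) V E"
  proof (rule close_cycle[OF ipq _ xV(3) _ _ _ _ sg])
    show "3 \<le> length qs" using lq aj by auto
    show "y \<notin> set qs" unfolding qs_def using xsq xy irr by auto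
    show "E y (qs ! 0)" unfolding qs_def using xy sym by auto
    have "length sq = Suc (j - a)" using lsq aj by auto
    then have "qs ! (length qs - 1) = sq ! (j - a)" unfolding qs_def by simp
    then show "E y (qs ! (length qs - 1))" using nsq[of "j - a"] aj ej by auto
    fix t assume "0 < t" "t < length qs - 1"
    then obtain t' where t': "t = Suc t'" "t' < j - a" using lq lsq by (cases t) auto
    then have "a + t' < L" "t' < Suc j - a" "a + t' < j" using jL aj by auto
    then show "\<not> E y (qs ! t)" unfolding qs_def using nsq[of t'] yattge[of "a + t'"] t'(1) by auto
  qed
  moreover have "Suc (length qs) \<ge> 4" using lq aj by auto
  ultimately show False using noC by blast
qed

lemma F3:
  assumes x: "off x" and y: "off y" and xy: "E x y"
  shows "\<not> apex x \<and> \<not> apex y \<and> att x = att y"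
proof (cases "\<exists>a<L. E x (ps ! a) \<and> E y (ps ! a)")
  case True
  then obtain a where a: "a < L" "E x (ps ! a)" "E y (ps ! a)" by blast
  have "\<not> apex x" using common_not_apex[OF x y xy a] .
  moreover have "\<not> apex y" using common_not_apex[OF y x sym[OF xy] a(1,3,2)] .
  ultimately show ?thesis using offE[OF x a(1)] offE[OF y a(1)] a by auto
next
  case False
  then have nc: "\<And>a. a < L \<Longrightarrow> E x (ps ! a) \<Longrightarrow> \<not> E y (ps ! a)" by blast
  have nc': "\<And>a. a < L \<Longrightarrow> E y (ps ! a) \<Longrightarrow> \<not> E x (ps ! a)" using False by blast
  have "att x \<noteq> att y" using nc[of "att x"] offE[OF x] offE[OF y] off_att[OF x] by auto
  then consider "att x < att y" | "att y < att x" by linarith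
  then show ?thesis
  proof cases
    case 1 then show ?thesis using nocommon_lt[OF x y xy nc] by blast
  next
    case 2 then show ?thesis using nocommon_lt[OF y x sym[OF xy] nc'] by blast
  qed
qed

lemma F4:
  assumes x: "off x" and y: "off y" and ax: "apex x" and ay: "apex y" and eq: "att x = att y"
  shows "x = y"
proof (rule ccontr)
  assume xy: "x \<noteq> y"
  define i where "i = att x"
  have i: "Suc i < L" using off_apex[OF x ax] unfolding i_def .
  have xV: "x \<in> V" "y \<in> V" using x y unfolding off_def by auto
  have t1: "tri V E x (ps ! i) (ps ! Suc i)"
    using tri_path[OF i xV(1)] offE[OF x] i ax unfolding i_def by auto
  have t2: "tri V E y (ps ! i) (ps ! Suc i)"
    using tri_path[OF i xV(2)] offE[OF y] i ay eq unfolding i_def by auto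
  show False
  proof (rule tri_contra[OF cac sg t1 t2, of "ps ! i" "ps ! Suc i"])
    show "ps ! i \<noteq> ps ! Suc i" using ps_eq[of i "Suc i"] i by auto
    show "{x, ps ! i} \<notin> {{y, ps ! i}, {ps ! i, ps ! Suc i}, {ps ! Suc i, y}}"
      using xy off_ne[OF x] i by (auto simp: doubleton_eq_iff)
  qed auto
qed

lemma F5:
  assumes a: "off a" and x: "off x" and y: "off y" and ax: "E a x" and ay: "E a y" and xy: "x \<noteq> y"
  shows False
proof -
  have h1: "\<not> apex a \<and> \<not> apex x \<and> att a = att x" using F3[OF a x ax] .
  have h2: "\<not> apex y \<and> att a = att y" using F3[OF a y ay] by auto
  define i where "i = att a"
  have i: "i < L" using off_att[OF a] unfolding i_def .
  have V3: "a \<in> V" "x \<in> V" "y \<in> V" using a x y unfolding off_def by auto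
  have t1: "tri V E a x (ps ! i)" unfolding tri_def using V3 ps_in[OF i] ax offE[OF x i] offE2[OF a i] h1
    unfolding i_def by auto
  have t2: "tri V E a y (ps ! i)" unfolding tri_def using V3 ps_in[OF i] ay offE[OF y i] offE2[OF a i] h2
    unfolding i_def by auto
  show False
  proof (rule tri_contra[OF cac sg t1 t2, of a "ps ! i"])
    show "a \<noteq> ps ! i" using off_ne[OF a i] by auto
    show "{a, x} \<notin> {{a, y}, {y, ps ! i}, {ps ! i, a}}"
      using xy off_ne[OF x i] ax irr by (auto simp: doubleton_eq_iff)
  qed auto
qed

end

lemma mulM: "(a::nat) + k \<le> b \<Longrightarrow> (0::int) \<le> M \<Longrightarrow> int a * M + int k * M \<le> int b * M"
proof -
  assume h: "a + k \<le> b" "0 \<le> M"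
  have "(int a + int k) * M \<le> int b * M" using h by (intro mult_right_mono) auto
  then show ?thesis by (simp add: distrib_right)
qed

lemma mulSuc: "int (Suc a) * M = int a * M + (M::int)"
  by (simp add: distrib_right)

lemma mul_inj: "(0::int) < M \<Longrightarrow> int a * M = int b * M \<Longrightarrow> a = b"
  by simp

context cs begin

lemma grp_pair:
  assumes x: "off x" and y: "off y" and xy: "E x y"
  shows "{x} \<union> {w. off w \<and> E x w} = {x, y}"
proof -
  have W: "w = y" if "off w" "E x w" for w
  proof (rule ccontr)
    assume "w \<noteq> y"
    then show False using F5[OF x that(1) y that(2) xy] by blast
  qed
  show ?thesis
  proof (rule set_eqI)
    fix w show "w \<in> {x} \<union> {w. off w \<and> E x w} \<longleftrightarrow> w \<in> {x, y}" using W y xy by blast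
  qed
qed

lemma B0: "B0_EPG V E"
proof -
  have finV: "finite V" using sg unfolding simple_graph_def by blast
  obtain idf :: "'a \<Rightarrow> nat" and n where idf: "idf ` V = {i. i < n}" "inj_on idf V"
    using finite_imp_inj_to_nat_seg[OF finV] by blast
  define M :: int where "M = int n + 2"
  define T where "T k = int k * M" for k
  have TM: "a + k \<le> b \<Longrightarrow> T a + int k * M \<le> T b" for a k b using mulM[of a k b M] unfolding T_def M_def by simp
  have TS: "T (Suc a) = T a + M" for a unfolding T_def by (rule mulSuc)
  have TI: "T a = T b \<Longrightarrow> a = b" for a b unfolding T_def M_def by simp
  define grp where "grp v = {v} \<union> {w. off w \<and> E v w}" for v
  define s where "s v = Min (idf ` grp v)" for v
  define pos where "pos v = (LEAST k. k < L \<and> ps ! k = v)" for v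
  define lo where "lo v = (if v \<in> set ps then T (pos v) else if apex v then T (att v) + M
     else T (att v) + 1 + int (s v))" for v
  define hi where "hi v = (if v \<in> set ps then T (pos v) + M + 1 else lo v + 1)" for v
  have M2: "M \<ge> 2" unfolding M_def by auto
  have grpV: "grp v \<subseteq> V" "finite (grp v)" "v \<in> grp v" if "v \<in> V" for v
    using that finV unfolding grp_def off_def by (auto intro: finite_subset)
  have s_in: "s v \<in> idf ` grp v" if "v \<in> V" for v
    unfolding s_def using grpV[OF that] by (intro Min_in) auto
  have s_lt: "int (s v) + 2 < M" if "v \<in> V" for v
  proof -
    have "s v \<in> idf ` V" using s_in[OF that] grpV[OF that] by blast
    then show ?thesis using idf(1) unfolding M_def by auto
  qed
  have pos_nth: "pos (ps ! k) = k" if "k < L" for k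
    unfolding pos_def using that ps_eq by (intro Least_equality) auto
  have s_eq: "s x = s y \<longleftrightarrow> E x y" if x: "off x" and y: "off y" and xy: "x \<noteq> y" for x y
  proof
    assume "E x y"
    then have "grp x = {x, y}" "grp y = {y, x}" using grp_pair[OF x y] grp_pair[OF y x] sym
      unfolding grp_def by auto
    then show "s x = s y" unfolding s_def by (simp add: insert_commute)
  next
    assume st: "s x = s y"
    have xV: "x \<in> V" "y \<in> V" using x y unfolding off_def by auto
    obtain a where a: "a \<in> grp x" "s x = idf a" using s_in[OF xV(1)] by auto
    obtain b where b: "b \<in> grp y" "s y = idf b" using s_in[OF xV(2)] by auto
    have "a \<in> V" "b \<in> V" using a(1) b(1) grpV(1)[OF xV(1)] grpV(1)[OF xV(2)] by auto
    then have "a = b" using idf(2) a(2) b(2) st unfolding inj_on_def by metis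
    then have ab: "a \<in> grp x" "a \<in> grp y" using a b by auto
    show "E x y"
    proof (rule ccontr)
      assume nxy: "\<not> E x y"
      show False
      proof (cases "a = x \<or> a = y")
        case True then show False using ab nxy xy sym unfolding grp_def by auto
      next
        case False
        then have "off a" "E x a" "E y a" using ab unfolding grp_def by auto
        then show False using F5[of a x y] x y xy sym by blast
      qed
    qed
  qed
  define cls where "cls v = (if v \<in> set ps then 0 else if apex v then 2 else (1::nat))" for v
  have off_iff: "off v \<longleftrightarrow> v \<in> V \<and> v \<notin> set ps" for v unfolding off_def by simp
  have key: "E u v \<longleftrightarrow> max (lo u) (lo v) < min (hi u) (hi v)"
    if uv: "u \<in> V" "v \<in> V" "u \<noteq> v" "cls u \<le> cls v" for u v
  proof (cases "u \<in> set ps")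
    case True
    then obtain a where a: "a < L" "u = ps ! a" by (auto simp: in_set_conv_nth)
    have lu: "lo u = T a" "hi u = T a + M + 1" unfolding lo_def hi_def using a pos_nth by auto
    show ?thesis
    proof (cases "v \<in> set ps")
      case True
      then obtain b where b: "b < L" "v = ps ! b" by (auto simp: in_set_conv_nth)
      have lv: "lo v = T b" "hi v = T b + M + 1" unfolding lo_def hi_def using b pos_nth by auto
      have ab: "a \<noteq> b" using uv a b by auto
      have E: "E u v \<longleftrightarrow> (a = Suc b \<or> b = Suc a)" using pathE a b by auto
      consider "b = Suc a" | "a = Suc b" | "a + 2 \<le> b" | "b + 2 \<le> a" using ab by linarith
      then show ?thesis
      proof cases
        case 1 then show ?thesis using E lu lv TS[of a] M2 by auto
      next
        case 2 then show ?thesis using E lu lv TS[of b] M2 by auto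
      next
        case 3 then show ?thesis using E lu lv TM[of a 2 b] M2 by auto
      next
        case 4 then show ?thesis using E lu lv TM[of b 2 a] M2 by auto
      qed
    next
      case False
      then have v: "off v" using uv off_iff by auto
      define i where "i = att v"
      have E: "E u v \<longleftrightarrow> (a = i \<or> (a = Suc i \<and> apex v))" using offE2[OF v a(1)] a unfolding i_def by auto
      have sv: "int (s v) + 2 < M" using s_lt uv by auto
      show ?thesis
      proof (cases "apex v")
        case True
        have lv: "lo v = T i + M" "hi v = T i + M + 1" unfolding lo_def hi_def i_def using False True by auto
        consider "a = i" | "a = Suc i" | "a + 1 \<le> i" | "i + 2 \<le> a" by linarith
        then show ?thesis
        proof cases
          case 1 then show ?thesis using E lu lv M2 by auto
        next
          case 2 then show ?thesis using E lu lv TS[of i] M2 True by auto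
        next
          case 3 then show ?thesis using E lu lv TM[of a 1 i] M2 by auto
        next
          case 4 then show ?thesis using E lu lv TM[of i 2 a] M2 by auto
        qed
      next
        case nap: False
        have lv: "lo v = T i + 1 + int (s v)" "hi v = T i + 2 + int (s v)"
          unfolding lo_def hi_def i_def using False nap by auto
        consider "a = i" | "a + 1 \<le> i" | "i + 1 \<le> a" by linarith
        then show ?thesis
        proof cases
          case 1 then show ?thesis using E lu lv M2 sv by auto
        next
          case 2 then show ?thesis using E lu lv TM[of a 1 i] M2 by auto
        next
          case 3 then show ?thesis using E lu lv TM[of i 1 a] M2 sv nap by auto
        qed
      qed
    qed
  next
    case False
    then have u: "off u" using uv off_iff by auto
    have v: "off v" using uv False unfolding cls_def off_iff by (auto split: if_splits)
    define i where "i = att u"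
    define j where "j = att v"
    have su: "int (s u) + 2 < M" and sv: "int (s v) + 2 < M" using s_lt uv by auto
    show ?thesis
    proof (cases "apex u")
      case True
      then have av: "apex v" using uv False v unfolding cls_def off_iff by (auto split: if_splits)
      have lu: "lo u = T i + M" "hi u = T i + M + 1" unfolding lo_def hi_def i_def using False True by auto
      have lv: "lo v = T j + M" "hi v = T j + M + 1" unfolding lo_def hi_def j_def using v av off_iff by auto
      have ij: "i \<noteq> j" using F4[OF u v True av] uv unfolding i_def j_def by auto
      have nE: "\<not> E u v" using F3[OF u v] True by auto
      have "T i \<noteq> T j" using ij TI by auto
      then show ?thesis using nE lu lv by auto
    next
      case nau: False
      have lu: "lo u = T i + 1 + int (s u)" "hi u = T i + 2 + int (s u)"
        unfolding lo_def hi_def i_def using False nau by auto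
      show ?thesis
      proof (cases "apex v")
        case True
        have lv: "lo v = T j + M" "hi v = T j + M + 1" unfolding lo_def hi_def j_def using v True off_iff by auto
        have nE: "\<not> E u v" using F3[OF u v] True by auto
        consider "j + 1 \<le> i" | "i \<le> j" by linarith
        then show ?thesis
        proof cases
          case 1 then show ?thesis using nE lu lv TM[of j 1 i] M2 su by auto
        next
          case 2
          have F: "T i \<le> T j" using TM[of i 0 j] 2 by simp
          show ?thesis unfolding lu lv using nE M2 su F by linarith
        qed
      next
        case nav: False
        have lv: "lo v = T j + 1 + int (s v)" "hi v = T j + 2 + int (s v)"
          unfolding lo_def hi_def j_def using v nav off_iff by auto
        consider "i = j" | "i + 1 \<le> j" | "j + 1 \<le> i" by linarith
        then show ?thesis
        proof cases
          case 1
          have "E u v \<longleftrightarrow> s u = s v" using s_eq[OF u v uv(3)] by simp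
          then show ?thesis using lu lv 1 by auto
        next
          case 2
          have nE: "\<not> E u v" using F3[OF u v] 2 unfolding i_def j_def by auto
          then show ?thesis using lu lv TM[of i 1 j] M2 su sv 2 by auto
        next
          case 3
          have nE: "\<not> E u v" using F3[OF u v] 3 unfolding i_def j_def by auto
          then show ?thesis using lu lv TM[of j 1 i] M2 su sv 3 by auto
        qed
      qed
    qed
  qed
  have key2: "E u v \<longleftrightarrow> max (lo u) (lo v) < min (hi u) (hi v)" if uv: "u \<in> V" "v \<in> V" "u \<noteq> v" for u v
  proof (cases "cls u \<le> cls v")
    case True then show ?thesis using key uv by blast
  next
    case False
    then have "E v u \<longleftrightarrow> max (lo v) (lo u) < min (hi v) (hi u)" using key uv by auto
    then show ?thesis using sym by (auto simp: max.commute min.commute)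
  qed
  have lohi: "lo v < hi v" for v unfolding hi_def lo_def using M2 by auto
  show ?thesis unfolding B0_EPG_def
  proof (intro exI[of _ "\<lambda>v. hseg_edges (lo v) (hi v) 0"] conjI ballI impI)
    fix v show "bendless_path (hseg_edges (lo v) (hi v) 0)" unfolding bendless_path_def using lohi by blast
  next
    fix u v assume "u \<in> V" "v \<in> V" "u \<noteq> v"
    then show "E u v = (hseg_edges (lo u) (hi u) 0 \<inter> hseg_edges (lo v) (hi v) 0 \<noteq> {})"
      using key2 hseg_inter by blast
  qed
qed

end

theorem theorem5p7:
  fixes V :: "'a set" and E :: "'a \<Rightarrow> 'a \<Rightarrow> bool"
  assumes "simple_graph V E" and "cactus V E"
  shows "B0_EPG V E \<longleftrightarrow>
    (\<not> induced_subgraph M2_V M2_E V E \<and> \<not> induced_subgraph M3_V M3_E V E \<and>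
     (\<forall>r\<ge>4. \<not> induced_subgraph (cycle_V r) (cycle_E r) V E))"
proof
  assume "B0_EPG V E"
  then show "\<not> induced_subgraph M2_V M2_E V E \<and> \<not> induced_subgraph M3_V M3_E V E \<and>
     (\<forall>r\<ge>4. \<not> induced_subgraph (cycle_V r) (cycle_E r) V E)" by (rule forward)
next
  assume H: "\<not> induced_subgraph M2_V M2_E V E \<and> \<not> induced_subgraph M3_V M3_E V E \<and>
     (\<forall>r\<ge>4. \<not> induced_subgraph (cycle_V r) (cycle_E r) V E)"
  have finV: "finite V" and irr: "\<And>u. \<not> E u u" using assms(1) unfolding simple_graph_def by auto
  obtain v where v: "v \<in> V" using assms(2) unfolding cactus_def graph_connected_def by blast
  have p1: "ipath V E [v]" unfolding ipath_def using v irr by auto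
  have bnd: "\<forall>qs. ipath V E qs \<longrightarrow> length qs < Suc (card V)"
  proof (intro allI impI)
    fix qs assume "ipath V E qs"
    then have "distinct qs" "set qs \<subseteq> V" unfolding ipath_def by auto
    then have "length qs \<le> card V" using card_mono[OF finV] distinct_card by metis
    then show "length qs < Suc (card V)" by simp
  qed
  obtain ps where ps: "ipath V E ps" "\<forall>qs. ipath V E qs \<longrightarrow> length qs \<le> length ps"
    using ex_has_greatest_nat[of "ipath V E" "[v]" length, OF p1 bnd] by blast
  have "ps \<noteq> []" using ps(2) p1 by fastforce
  then interpret cs V E ps using assms H ps by unfold_locales auto
  show "B0_EPG V E" by (rule B0)
qed


end
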